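(* Let $(\rho,\mu,\nu)$ be a regular triple of standard representations of $\mathcal{W}_N$ and $R=R(\rho,\mu,\nu)$. Then, as $N^2\times N^2$ matrices, with $Z_1=Z\otimes\mathrm{id}$, $Z_2=\mathrm{id}\otimes Z$, $Y_1=Y\otimes\mathrm{id}$, $Y_2=\mathrm{id}\otimes Y$: $$(C_1)\ R\,Z_1Y_2=Z_1Y_2\,R,\qquad (C_2)\ R\,Y_1=Y_1Y_2\,R,\qquad (C_3)\ R\,Z_1Z_2=Z_2\,R.$$
   Context: $N\ge3$ odd, $N=2P+1$, $\omega=e^{2\pi i/N}$; for integers $r$, $\omega^{r/2}:=(\omega^{P+1})^r$. Indices run over $\mathbb{Z}/N$; $\delta(n)=1$ if $n\equiv0\pmod N$, else $0$. $X_{ij}=\delta(i-j-1)$, $Z_{ij}=\omega^i\delta(i-j)$, $Y=\omega^{1/2}XZ$, i.e. $Y_{ij}=\omega^{1/2+j}\delta(i-j-1)$. $\mathcal{W}_N$: unital $\mathbb{C}$-algebra generated by $E,E^{-1},D$ with $EE^{-1}=E^{-1}E=1$, $ED=\omega DE$, $\Delta(E)=E\otimes E$, $\Delta(D)=E\otimes D+D\otimes1$; tensor products via $\Delta$; cyclic = $E,D$ act invertibly; regular = every tensor product of consecutive terms cyclic. Standard representation with parameters $(a_\rho,y_\rho)\in(\mathbb{C}^* )^2$: $\rho(E)=a_\rho^2Z$, $\rho(D)=a_\rho y_\rho X$. A determination $u\mapsto u^{1/N}$ of the $N$-th root is fixed; $\rho\mu$ has $a_{\rho\mu}=a_\rho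 a_\mu$, $y_{\rho\mu}=(a_\rho^Ny_\mu^N+y_\rho^Na_\mu^{-N})^{1/N}$; products are associative. Standing convention: $-\frac{y_\rho y_\nu}{y_{\rho\mu\nu}y_\mu}=r\big(\frac{y_{\rho\mu}y_{\mu\nu}}{y_{\rho\mu\nu}y_\mu}\big)$. Functions: for $x^N+y^N=z^N$, $\omega(x,y,z|n)=\prod_{j=1}^n\frac{y}{z-x\omega^j}$ ($0\le n\le N-1$), extended $N$-periodically; $\omega(x,y,z|m,n)=\omega(x,y,z|m-n)\omega^{n^2/2}$. $g(x)=\prod_{j=1}^{N-1}(1-x\omega^j)^{j/N}$, $r(x)=(1-x^N)^{1/N}$ (analytic continuations from $0$ to $\mathbb{C}\setminus\{|x|\ge1,\arg x\in\theta+\frac{2\pi}{N}\mathbb{Z}\}$, $\theta$ fixed so $g$ avoids the cuts); $h(x)=x^{-P}g(x)/g(1)$. $6j$-symbol: $R(\rho,\mu,\nu)^{\gamma,\delta}_{\alpha,\beta}=h\big(\frac{y_{\rho\mu}y_{\mu\nu}}{y_{\rho\mu\nu}y_\mu}\big)\omega^{\alpha\delta}\omega(y_{\rho\mu\nu}y_\mu,y_\rho y_\nu,y_{\rho\mu}y_{\mu\nu}|\gamma,\alpha)\delta(\gamma+\delta-\beta)$. Matrix convention: an array $M^{\gamma,\delta}_{\alpha,\beta}$ is the $N^2\times N^2$ matrix with entry $M^{\gamma,\delta}_{\alpha,\beta}$ in row $(\alpha,\beta)$, column $(\gamma,\delta)$; $A\otimes B$ has entry $A_{\alpha\gamma}B_{\beta\delta}$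 there; products are matrix products. *)

theory Defs
  imports "HOL-Analysis.Analysis"
begin

definition omg :: "nat \<Rightarrow> complex" where
  "omg N = cis (2 * pi / real N)"

text \<open>omega^(r/2) := (omega^(P+1))^r for integers r, where N = 2P+1.\<close>
definition half_pow :: "nat \<Rightarrow> int \<Rightarrow> complex" where
  "half_pow N r = (omg N ^ ((N - 1) div 2 + 1)) powi r"

definition dlt :: "nat \<Rightarrow> int \<Rightarrow> complex" where
  "dlt N n = (if n mod int N = 0 then 1 else 0)"

definition mmul :: "'i set \<Rightarrow> ('i \<Rightarrow> 'i \<Rightarrow> complex) \<Rightarrow> ('i \<Rightarrow> 'i \<Rightarrow> complex) \<Rightarrow> ('i \<Rightarrow> 'i \<Rightarrow> complex)" where
  "mmul I A B = (\<lambda>i k. \<Sum>j\<in>I. A i j * B j k)"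

definition madd :: "('i \<Rightarrow> 'i \<Rightarrow> complex) \<Rightarrow> ('i \<Rightarrow> 'i \<Rightarrow> complex) \<Rightarrow> ('i \<Rightarrow> 'i \<Rightarrow> complex)" where
  "madd A B = (\<lambda>i k. A i k + B i k)"

definition msmult :: "complex \<Rightarrow> ('i \<Rightarrow> 'i \<Rightarrow> complex) \<Rightarrow> ('i \<Rightarrow> 'i \<Rightarrow> complex)" where
  "msmult c A = (\<lambda>i k. c * A i k)"

definition idm :: "'i \<Rightarrow> 'i \<Rightarrow> complex" where
  "idm = (\<lambda>i k. if i = k then 1 else 0)"

definition kron :: "('i \<Rightarrow> 'i \<Rightarrow> complex) \<Rightarrow> ('j \<Rightarrow> 'j \<Rightarrow> complex) \<Rightarrow> ('i \<times> 'j \<Rightarrow> 'i \<times> 'j \<Rightarrow> complex)" where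
  "kron A B = (\<lambda>(\<alpha>, \<beta>) (\<gamma>, \<delta>). A \<alpha> \<gamma> * B \<beta> \<delta>)"

definition meq :: "'i set \<Rightarrow> ('i \<Rightarrow> 'i \<Rightarrow> complex) \<Rightarrow> ('i \<Rightarrow> 'i \<Rightarrow> complex) \<Rightarrow> bool" where
  "meq I A B = (\<forall>i\<in>I. \<forall>k\<in>I. A i k = B i k)"

definition invertible_on :: "'i set \<Rightarrow> ('i \<Rightarrow> 'i \<Rightarrow> complex) \<Rightarrow> bool" where
  "invertible_on I A = (\<exists>B. meq I (mmul I A B) idm \<and> meq I (mmul I B A) idm)"

section \<open>The matrices X, Z, Y (indices 0..N-1 representing Z/N)\<close>

definition Xm :: "nat \<Rightarrow> nat \<Rightarrow> nat \<Rightarrow> complex" where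
  "Xm N = (\<lambda>i j. dlt N (int i - int j - 1))"

definition Zm :: "nat \<Rightarrow> nat \<Rightarrow> nat \<Rightarrow> complex" where
  "Zm N = (\<lambda>i j. omg N ^ i * dlt N (int i - int j))"

definition Ym :: "nat \<Rightarrow> nat \<Rightarrow> nat \<Rightarrow> complex" where
  "Ym N = msmult (half_pow N 1) (mmul {..<N} (Xm N) (Zm N))"

text \<open>A representation is given by the pair (rho(E), rho(D)); it is then determined
  on the whole algebra. Standard representation with parameters (a,y).\<close>
definition std_rep :: "nat \<Rightarrow> complex \<times> complex \<Rightarrow> (nat \<Rightarrow> nat \<Rightarrow> complex) \<times> (nat \<Rightarrow> nat \<Rightarrow> complex)" where
  "std_rep N p = (case p of (a, y) \<Rightarrow> (msmult (a^2) (Zm N), msmult (a * y) (Xm N)))"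

text \<open>Tensor product via the coproduct: Delta(E) = E (x) E, Delta(D) = E (x) D + D (x) 1.\<close>
definition tensor_rep :: "('i \<Rightarrow> 'i \<Rightarrow> complex) \<times> ('i \<Rightarrow> 'i \<Rightarrow> complex) \<Rightarrow> ('j \<Rightarrow> 'j \<Rightarrow> complex) \<times> ('j \<Rightarrow> 'j \<Rightarrow> complex)
    \<Rightarrow> ('i \<times> 'j \<Rightarrow> 'i \<times> 'j \<Rightarrow> complex) \<times> ('i \<times> 'j \<Rightarrow> 'i \<times> 'j \<Rightarrow> complex)" where
  "tensor_rep r s = (kron (fst r) (fst s), madd (kron (fst r) (snd s)) (kron (snd r) idm))"

text \<open>Cyclic: E and D act invertibly (on the representation space indexed by I).\<close>
definition cyclic_rep :: "'i set \<Rightarrow> ('i \<Rightarrow> 'i \<Rightarrow> complex) \<times> ('i \<Rightarrow> 'i \<Rightarrow> complex) \<Rightarrow> bool" where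
  "cyclic_rep I r = (invertible_on I (fst r) \<and> invertible_on I (snd r))"

definition regular_triple :: "nat \<Rightarrow> complex \<times> complex \<Rightarrow> complex \<times> complex \<Rightarrow> complex \<times> complex \<Rightarrow> bool" where
  "regular_triple N \<rho> \<mu> \<nu> =
    (let I = {..<N}; r = std_rep N \<rho>; m = std_rep N \<mu>; n = std_rep N \<nu> in
       cyclic_rep I r \<and> cyclic_rep I m \<and> cyclic_rep I n \<and>
       cyclic_rep (I \<times> I) (tensor_rep r m) \<and> cyclic_rep (I \<times> I) (tensor_rep m n) \<and>
       cyclic_rep ((I \<times> I) \<times> I) (tensor_rep (tensor_rep r m) n))"

text \<open>rt is the fixed determination of the N-th root.\<close>
definition prod_par :: "(complex \<Rightarrow> complex) \<Rightarrow> nat \<Rightarrow> complex \<times> complex \<Rightarrow> complex \<times> complex \<Rightarrow> complex \<times> complex" where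
  "prod_par rt N p q = (case p of (a1, y1) \<Rightarrow> case q of (a2, y2) \<Rightarrow>
     (a1 * a2, rt (a1 ^ N * y2 ^ N + y1 ^ N * inverse (a2 ^ N))))"

definition cyc_omega :: "nat \<Rightarrow> complex \<Rightarrow> complex \<Rightarrow> complex \<Rightarrow> int \<Rightarrow> complex" where
  "cyc_omega N x y z n = (\<Prod>j\<in>{1..nat (n mod int N)}. y / (z - x * omg N ^ j))"

definition cyc_omega2 :: "nat \<Rightarrow> complex \<Rightarrow> complex \<Rightarrow> complex \<Rightarrow> int \<Rightarrow> int \<Rightarrow> complex" where
  "cyc_omega2 N x y z m n = cyc_omega N x y z (m - n) * half_pow N (n ^ 2)"

definition cut_domain :: "nat \<Rightarrow> real \<Rightarrow> complex set" where
  "cut_domain N \<theta> = {x. \<not> (1 \<le> norm x \<and> (\<exists>k::int. Arg x = \<theta> + 2 * pi * real_of_int k / real N))}"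

text \<open>Analytic continuation from 0 of an N-th root of p on a domain Omega: the (unique)
  holomorphic function f on Omega with f 0 = 1 and f^N = p.\<close>
definition branch :: "nat \<Rightarrow> complex set \<Rightarrow> (complex \<Rightarrow> complex) \<Rightarrow> complex \<Rightarrow> complex" where
  "branch N \<Omega> p = (THE f. f holomorphic_on \<Omega> \<and> f 0 = 1 \<and> (\<forall>x\<in>\<Omega>. f x ^ N = p x))"

definition gpoly :: "nat \<Rightarrow> complex \<Rightarrow> complex" where
  "gpoly N x = (\<Prod>j\<in>{1..N-1}. (1 - x * omg N ^ j) ^ j)"

definition g_fun :: "nat \<Rightarrow> real \<Rightarrow> complex \<Rightarrow> complex" where
  "g_fun N \<theta> = branch N (cut_domain N \<theta>) (gpoly N)"

definition r_fun :: "nat \<Rightarrow> real \<Rightarrow> complex \<Rightarrow> complex" where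
  "r_fun N \<theta> = branch N (cut_domain N \<theta>) (\<lambda>x. 1 - x ^ N)"

text \<open>theta is such that g avoids the cuts: g is analytic on the cut domain.\<close>
definition g_avoids_cuts :: "nat \<Rightarrow> real \<Rightarrow> bool" where
  "g_avoids_cuts N \<theta> = (\<exists>f. f holomorphic_on cut_domain N \<theta> \<and> f 0 = 1 \<and>
      (\<forall>x\<in>cut_domain N \<theta>. f x ^ N = gpoly N x))"

text \<open>g(1): value of (the continuous extension of) g at 1.\<close>
definition g_one :: "nat \<Rightarrow> real \<Rightarrow> complex" where
  "g_one N \<theta> = Lim (at 1 within cut_domain N \<theta>) (g_fun N \<theta>)"

definition h_fun :: "nat \<Rightarrow> real \<Rightarrow> complex \<Rightarrow> complex" where
  "h_fun N \<theta> x = inverse (x ^ ((N - 1) div 2)) * g_fun N \<theta> x / g_one N \<theta>"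

definition sixj_arg :: "(complex \<Rightarrow> complex) \<Rightarrow> nat \<Rightarrow> complex \<times> complex \<Rightarrow> complex \<times> complex \<Rightarrow> complex \<times> complex \<Rightarrow> complex" where
  "sixj_arg rt N \<rho> \<mu> \<nu> =
     (let y\<rho>\<mu> = snd (prod_par rt N \<rho> \<mu>); y\<mu>\<nu> = snd (prod_par rt N \<mu> \<nu>);
          y\<rho>\<mu>\<nu> = snd (prod_par rt N (prod_par rt N \<rho> \<mu>) \<nu>)
      in (y\<rho>\<mu> * y\<mu>\<nu>) / (y\<rho>\<mu>\<nu> * snd \<mu>))"

definition standing_convention :: "nat \<Rightarrow> real \<Rightarrow> (complex \<Rightarrow> complex) \<Rightarrow> complex \<times> complex \<Rightarrow> complex \<times> complex \<Rightarrow> complex \<times> complex \<Rightarrow> bool" where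
  "standing_convention N \<theta> rt \<rho> \<mu> \<nu> =
     (let y\<rho>\<mu>\<nu> = snd (prod_par rt N (prod_par rt N \<rho> \<mu>) \<nu>) in
       - (snd \<rho> * snd \<nu>) / (y\<rho>\<mu>\<nu> * snd \<mu>) = r_fun N \<theta> (sixj_arg rt N \<rho> \<mu> \<nu>))"

definition sixj :: "nat \<Rightarrow> real \<Rightarrow> (complex \<Rightarrow> complex) \<Rightarrow> complex \<times> complex \<Rightarrow> complex \<times> complex \<Rightarrow> complex \<times> complex
    \<Rightarrow> (nat \<times> nat \<Rightarrow> nat \<times> nat \<Rightarrow> complex)" where
  "sixj N \<theta> rt \<rho> \<mu> \<nu> =
     (let y\<rho>\<mu> = snd (prod_par rt N \<rho> \<mu>); y\<mu>\<nu> = snd (prod_par rt N \<mu> \<nu>);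
          y\<rho>\<mu>\<nu> = snd (prod_par rt N (prod_par rt N \<rho> \<mu>) \<nu>)
      in (\<lambda>(\<alpha>, \<beta>) (\<gamma>, \<delta>).
            h_fun N \<theta> (sixj_arg rt N \<rho> \<mu> \<nu>) * omg N ^ (\<alpha> * \<delta>) *
            cyc_omega2 N (y\<rho>\<mu>\<nu> * snd \<mu>) (snd \<rho> * snd \<nu>) (y\<rho>\<mu> * y\<mu>\<nu>) (int \<gamma>) (int \<alpha>) *
            dlt N (int \<gamma> + int \<delta> - int \<beta>)))"

end

theory Submission
  imports Defs
begin

lemma omg_N: "N > 0 \<Longrightarrow> omg N ^ N = 1"
proof -
  assume "N > 0"
  hence h: "real N * (2 * pi / real N) = 2 * pi" by simp
  have "omg N ^ N = cis (real N * (2 * pi / real N))" unfolding omg_def by (rule Complex.DeMoivre)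
  also have "\<dots> = 1" using h by simp
  finally show ?thesis .
qed

lemma omg_nz: "omg N \<noteq> 0"
  by (simp add: omg_def)

lemma omg_pow_mod: "N > 0 \<Longrightarrow> omg N ^ n = omg N ^ (n mod N)"
proof -
  assume N: "N > 0"
  have "omg N ^ n = omg N ^ (N * (n div N) + n mod N)" by simp
  also have "\<dots> = (omg N ^ N) ^ (n div N) * omg N ^ (n mod N)"
    by (simp only: power_add power_mult)
  finally show ?thesis using omg_N[OF N] by simp
qed

lemma omg_eq: assumes "N > 0" "int N dvd (int a - int b)"
  shows "omg N ^ a = omg N ^ b"
proof -
  have "int a mod int N = int b mod int N" using assms(2) by (simp add: mod_eq_dvd_iff)
  hence "a mod N = b mod N" by (metis of_nat_eq_iff zmod_int)
  thus ?thesis by (metis omg_pow_mod[OF assms(1)])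
qed

lemma dlt_same: "i < N \<Longrightarrow> j < N \<Longrightarrow> dlt N (int i - int j) = (if i = j then 1 else 0)"
proof -
  assume a: "i < N" "j < N"
  have "(int i - int j) mod int N = 0 \<longleftrightarrow> int i mod int N = int j mod int N"
    by (simp add: mod_eq_dvd_iff dvd_eq_mod_eq_0)
  also have "\<dots> \<longleftrightarrow> i = j" using a by simp
  finally show ?thesis unfolding dlt_def by simp
qed

lemma sum_single_pt:
  assumes "finite S" "a \<in> S" "\<And>k. k \<in> S \<Longrightarrow> k \<noteq> a \<Longrightarrow> f k = 0"
  shows "sum f S = f a"
  using assms by (subst sum.remove[of S a]) (auto intro: sum.neutral)

lemma dlt_cong: "int N dvd (x - y) \<Longrightarrow> dlt N x = dlt N y"
proof -
  assume "int N dvd (x - y)"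
  hence "x mod int N = y mod int N" by (simp add: mod_eq_dvd_iff)
  thus ?thesis by (simp add: dlt_def)
qed

lemma dlt_nz: "dlt N x \<noteq> 0 \<Longrightarrow> int N dvd x"
  by (simp add: dlt_def dvd_eq_mod_eq_0 split: if_splits)

lemma dlt_01: "dlt N x = 0 \<or> dlt N x = 1"
  by (simp add: dlt_def)

lemma modrep: "\<exists>m. int (x mod N) = int x + int N * m"
proof -
  have "int x = int N * int (x div N) + int (x mod N)"
    by (metis of_nat_add of_nat_mult div_mult_mod_eq mult.commute)
  hence "int (x mod N) = int x + int N * (- int (x div N))" by simp
  thus ?thesis by blast
qed

lemma sucrep: "\<exists>m. int (Suc c mod N) = int c + 1 + int N * m"
  using modrep[of "Suc c" N] by (simp add: ac_simps)

lemma predrep: "N > 0 \<Longrightarrow> \<exists>m. int ((b + N - 1) mod N) = int b - 1 + int N * m"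
proof -
  assume N: "N > 0"
  obtain m where "int ((b + N - 1) mod N) = int (b + N - 1) + int N * m" using modrep by blast
  moreover have "int (b + N - 1) = int b - 1 + int N" using N by simp
  ultimately have "int ((b + N - 1) mod N) = int b - 1 + int N * (m + 1)"
    by (simp add: algebra_simps)
  thus ?thesis by blast
qed

lemma suc_mod: "d < N \<Longrightarrow> Suc d mod N = (if Suc d = N then 0 else Suc d)"
  by auto

lemma pred_mod: "(b::nat) < N \<Longrightarrow> (b + N - 1) mod N = (if b = 0 then N - 1 else b - 1)"
proof -
  assume b: "b < N"
  show ?thesis
  proof (cases "b = 0")
    case True
    have "N - 1 < N" using b by (simp add: diff_less)
    thus ?thesis using True by simp
  next
    case False
    hence "b + N - 1 = (b - 1) + N" by simp
    hence "(b + N - 1) mod N = (b - 1) mod N" by simp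
    thus ?thesis using b False by simp
  qed
qed

lemma pred_iff: assumes "b < N" "d < N" shows "(b = Suc d mod N) \<longleftrightarrow> (d = (b + N - 1) mod N)"
proof -
  have s: "Suc d mod N = (if Suc d = N then 0 else Suc d)" using assms suc_mod by blast
  have p: "(b + N - 1) mod N = (if b = 0 then N - 1 else b - 1)" using assms pred_mod by blast
  show ?thesis unfolding s p using assms by auto
qed

lemma Zm_eq: "i < N \<Longrightarrow> j < N \<Longrightarrow> Zm N i j = (if i = j then omg N ^ i else 0)"
  by (simp add: Zm_def dlt_same)

lemma Xm_eq: assumes "i < N" "j < N" shows "Xm N i j = (if i = Suc j mod N then 1 else 0)"
proof -
  obtain m where m: "int (Suc j mod N) = int j + 1 + int N * m" using sucrep by blast
  have "dlt N (int i - int j - 1) = dlt N (int i - int (Suc j mod N))"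
    by (rule dlt_cong) (simp add: m)
  also have "\<dots> = (if i = Suc j mod N then 1 else 0)"
    using assms by (simp add: dlt_same)
  finally show ?thesis by (simp add: Xm_def)
qed

definition QQ :: "nat \<Rightarrow> nat" where "QQ N = (N - 1) div 2 + 1"

lemma half_pow1: "half_pow N 1 = omg N ^ QQ N"
  by (simp add: half_pow_def QQ_def)

lemma half_pow_sq: "half_pow N (int a ^ 2) = omg N ^ (QQ N * a ^ 2)"
proof -
  have "half_pow N (int a ^ 2) = (omg N ^ QQ N) powi int (a ^ 2)"
    by (simp add: half_pow_def QQ_def)
  also have "\<dots> = omg N ^ (QQ N * a ^ 2)" by (simp only: power_int_of_nat power_mult)
  finally show ?thesis .
qed

lemma Ym_eq: assumes "i < N" "j < N"
  shows "Ym N i j = (if i = Suc j mod N then omg N ^ QQ N * omg N ^ j else 0)"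
proof -
  have "mmul {..<N} (Xm N) (Zm N) i j = Xm N i j * Zm N j j"
    unfolding mmul_def
    by (rule sum_single_pt) (use assms in \<open>auto simp: Zm_eq\<close>)
  thus ?thesis using assms by (simp add: Ym_def msmult_def half_pow1 Xm_eq Zm_eq)
qed

lemma mmul_col:
  assumes "finite I" "s \<in> I" "\<And>p. p \<in> I \<Longrightarrow> B p k = (if p = s then v else 0)"
  shows "mmul I A B i k = A i s * v"
proof -
  have "mmul I A B i k = A i s * B s k"
    unfolding mmul_def by (rule sum_single_pt) (use assms in auto)
  thus ?thesis using assms by simp
qed

lemma mmul_row:
  assumes "finite I" "t \<in> I" "\<And>p. p \<in> I \<Longrightarrow> A i p = (if p = t then v else 0)"
  shows "mmul I A B i k = v * B t k"
proof -
  have "mmul I A B i k = A i t * B t k"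
    unfolding mmul_def by (rule sum_single_pt) (use assms in auto)
  thus ?thesis using assms by simp
qed


lemma mmul_col2:
  assumes "finite I" "finite J" "s \<in> I \<times> J"
    "\<And>x y. x \<in> I \<Longrightarrow> y \<in> J \<Longrightarrow> B (x,y) k = (if (x,y) = s then v else 0)"
  shows "mmul (I \<times> J) A B i k = A i s * v"
proof (rule mmul_col)
  show "finite (I \<times> J)" using assms by simp
  show "s \<in> I \<times> J" by fact
  fix p assume "p \<in> I \<times> J"
  then obtain x y where "p = (x,y)" "x \<in> I" "y \<in> J" by auto
  thus "B p k = (if p = s then v else 0)" using assms(4) by simp
qed

lemma mmul_row2:
  assumes "finite I" "finite J" "t \<in> I \<times> J"
    "\<And>x y. x \<in> I \<Longrightarrow> y \<in> J \<Longrightarrow> A i (x,y) = (if (x,y) = t then v else 0)"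
  shows "mmul (I \<times> J) A B i k = v * B t k"
proof (rule mmul_row)
  show "finite (I \<times> J)" using assms by simp
  show "t \<in> I \<times> J" by fact
  fix p assume "p \<in> I \<times> J"
  then obtain x y where "p = (x,y)" "x \<in> I" "y \<in> J" by auto
  thus "A i p = (if p = t then v else 0)" using assms(4) by simp
qed

lemma dvdI': "x = int N * m \<Longrightarrow> int N dvd x"
  by simp

context
  fixes N :: nat
  assumes Npos: "N > 0"
begin

lemma Z1_eq: "a < N \<Longrightarrow> b < N \<Longrightarrow> c < N \<Longrightarrow> d < N \<Longrightarrow>
  kron (Zm N) idm (a,b) (c,d) = (if (c,d) = (a,b) then omg N ^ a else 0)"
  by (simp add: kron_def Zm_eq idm_def)

lemma Z2_eq: "a < N \<Longrightarrow> b < N \<Longrightarrow> c < N \<Longrightarrow> d < N \<Longrightarrow>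
  kron idm (Zm N) (a,b) (c,d) = (if (c,d) = (a,b) then omg N ^ b else 0)"
  by (simp add: kron_def Zm_eq idm_def)

lemma Y2_col: "a < N \<Longrightarrow> b < N \<Longrightarrow> c < N \<Longrightarrow> d < N \<Longrightarrow>
  kron idm (Ym N) (a,b) (c,d) = (if (a,b) = (c, Suc d mod N) then omg N ^ QQ N * omg N ^ d else 0)"
  by (simp add: kron_def Ym_eq idm_def)

lemma Y2_row: assumes "a < N" "b < N" "c < N" "d < N"
  shows "kron idm (Ym N) (a,b) (c,d) = (if (c,d) = (a, (b + N - 1) mod N)
     then omg N ^ QQ N * omg N ^ ((b + N - 1) mod N) else 0)"
proof -
  have e: "(b = Suc d mod N) = (d = (b + N - 1) mod N)" using pred_iff[of b N d] assms by simp
  have "kron idm (Ym N) (a,b) (c,d) = (if a = c then 1 else 0) *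
     (if d = (b + N - 1) mod N then omg N ^ QQ N * omg N ^ d else 0)"
    using assms by (simp only: kron_def Ym_eq idm_def e split_conv)
  thus ?thesis by simp
qed

lemma Y1_col: "a < N \<Longrightarrow> b < N \<Longrightarrow> c < N \<Longrightarrow> d < N \<Longrightarrow>
  kron (Ym N) idm (a,b) (c,d) = (if (a,b) = (Suc c mod N, d) then omg N ^ QQ N * omg N ^ c else 0)"
  by (simp add: kron_def Ym_eq idm_def)

lemma Y1_row: assumes "a < N" "b < N" "c < N" "d < N"
  shows "kron (Ym N) idm (a,b) (c,d) = (if (c,d) = ((a + N - 1) mod N, b)
     then omg N ^ QQ N * omg N ^ ((a + N - 1) mod N) else 0)"
proof -
  have e: "(a = Suc c mod N) = (c = (a + N - 1) mod N)" using pred_iff[of a N c] assms by simp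
  have "kron (Ym N) idm (a,b) (c,d) =
     (if c = (a + N - 1) mod N then omg N ^ QQ N * omg N ^ c else 0) * (if b = d then 1 else 0)"
    using assms by (simp only: kron_def Ym_eq idm_def e split_conv)
  thus ?thesis by auto
qed

lemma S3:
  assumes Rdef: "\<And>a b c d. R (a,b) (c,d) = K * omg N ^ (a*d) * (W (int c - int a) * half_pow N (int a ^ 2)) * dlt N (int c + int d - int b)"
  shows "R (a,b) (c,d) * (omg N ^ c * omg N ^ d) = omg N ^ b * R (a,b) (c,d)"
proof (cases "dlt N (int c + int d - int b) = 0")
  case True thus ?thesis by (simp add: Rdef)
next
  case False
  then obtain j where j: "int c + int d - int b = int N * j" using dlt_nz by (metis dvdE)
  have "omg N ^ (c + d) = omg N ^ b" by (rule omg_eq[OF Npos]) (simp add: j)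
  hence e: "omg N ^ c * omg N ^ d = omg N ^ b" by (simp add: power_add)
  show ?thesis by (subst e) (rule mult.commute)
qed

lemma S1:
  assumes Rdef: "\<And>a b c d. R (a,b) (c,d) = K * omg N ^ (a*d) * (W (int c - int a) * half_pow N (int a ^ 2)) * dlt N (int c + int d - int b)"
    and hd: "int d' = int d + 1 + int N * k1" and hb: "int b' = int b - 1 + int N * k2"
  shows "R (a,b) (c,d') * (omg N ^ c * (omg N ^ Q * omg N ^ d)) = omg N ^ a * (omg N ^ Q * omg N ^ b') * R (a,b') (c,d)"
proof -
  have dl: "dlt N (int c + int d' - int b) = dlt N (int c + int d - int b')"
    by (rule dlt_cong, rule dvdI'[of _ _ "k1 + k2"]) (simp add: hd hb algebra_simps)
  show ?thesis
  proof (cases "dlt N (int c + int d - int b') = 0")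
    case True thus ?thesis by (simp add: Rdef dl)
  next
    case False
    then obtain j where j: "int c + int d - int b' = int N * j" using dlt_nz by (metis dvdE)
    hence jb: "int b' = int c + int d - int N * j" by simp
    have e: "omg N ^ (a*d' + c + Q + d) = omg N ^ (a + Q + b' + a*d)"
      by (rule omg_eq[OF Npos], rule dvdI'[of _ _ "int a * k1 + j"]) (simp add: hd jb algebra_simps)
    have L: "R (a,b) (c,d') * (omg N ^ c * (omg N ^ Q * omg N ^ d)) =
      (K * (W (int c - int a) * half_pow N (int a ^ 2)) * dlt N (int c + int d - int b')) * omg N ^ (a*d' + c + Q + d)"
      by (simp only: Rdef dl power_add mult_ac)
    have RR: "omg N ^ a * (omg N ^ Q * omg N ^ b') * R (a,b') (c,d) =
      (K * (W (int c - int a) * half_pow N (int a ^ 2)) * dlt N (int c + int d - int b')) * omg N ^ (a + Q + b' + a*d)"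
      by (simp only: Rdef power_add mult_ac)
    show ?thesis by (simp only: L RR e)
  qed
qed

lemma two_Q: "odd N \<Longrightarrow> 2 * QQ N = N + 1"
  unfolding QQ_def by presburger

lemma S2:
  assumes oddN: "odd N"
    and Rdef: "\<And>a b c d. R (a,b) (c,d) = K * omg N ^ (a*d) * (W (int c - int a) * half_pow N (int a ^ 2)) * dlt N (int c + int d - int b)"
    and Wper: "\<And>n. W n = W (n mod int N)"
    and hc: "int c' = int c + 1 + int N * k1" and ha: "int a' = int a - 1 + int N * m"
    and hb: "int b' = int b - 1 + int N * k2"
  shows "R (a,b) (c',d) * (omg N ^ QQ N * omg N ^ c) = (omg N ^ QQ N * omg N ^ a') * (omg N ^ QQ N * omg N ^ b') * R (a',b') (c,d)"
proof -
  have dl: "dlt N (int c' + int d - int b) = dlt N (int c + int d - int b')"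
    by (rule dlt_cong, rule dvdI'[of _ _ "k1 + k2"]) (simp add: hc hb algebra_simps)
  have "int N dvd ((int c' - int a) - (int c - int a'))"
    by (rule dvdI'[of _ _ "k1 + m"]) (simp add: hc ha algebra_simps)
  hence "(int c' - int a) mod int N = (int c - int a') mod int N" by (simp add: mod_eq_dvd_iff)
  hence Wq: "W (int c' - int a) = W (int c - int a')" by (metis Wper)
  have hQ: "int N = 2 * int (QQ N) - 1" using two_Q[OF oddN] by linarith
  show ?thesis
  proof (cases "dlt N (int c + int d - int b') = 0")
    case True thus ?thesis by (simp add: Rdef dl)
  next
    case False
    then obtain j where j: "int c + int d - int b' = int N * j" using dlt_nz by (metis dvdE)
    hence jb: "int b' = int c + int d - int N * j" by simp
    have e: "omg N ^ (a*d + QQ N * a^2 + QQ N + c) = omg N ^ (QQ N + a' + QQ N + b' + a'*d + QQ N * a'^2)"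
      by (rule omg_eq[OF Npos], rule dvdI'[of _ _ "- (1 - int a - j + m + m * int d + int (QQ N) * (2 * (int a - 1) * m + int N * m^2))"])
        (simp add: ha jb hQ algebra_simps power2_eq_square)
    have L: "R (a,b) (c',d) * (omg N ^ QQ N * omg N ^ c) =
      (K * W (int c - int a') * dlt N (int c + int d - int b')) * omg N ^ (a*d + QQ N * a^2 + QQ N + c)"
      by (simp only: Rdef dl Wq half_pow_sq power_add mult_ac)
    have RR: "(omg N ^ QQ N * omg N ^ a') * (omg N ^ QQ N * omg N ^ b') * R (a',b') (c,d) =
      (K * W (int c - int a') * dlt N (int c + int d - int b')) * omg N ^ (QQ N + a' + QQ N + b' + a'*d + QQ N * a'^2)"
      by (simp only: Rdef half_pow_sq power_add mult_ac)
    show ?thesis by (simp only: L RR e)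
  qed
qed

lemma C3:
  assumes Rdef: "\<And>a b c d. R (a,b) (c,d) = K * omg N ^ (a*d) * (W (int c - int a) * half_pow N (int a ^ 2)) * dlt N (int c + int d - int b)"
  shows "meq ({..<N} \<times> {..<N}) (mmul ({..<N} \<times> {..<N}) R (mmul ({..<N} \<times> {..<N}) (kron (Zm N) idm) (kron idm (Zm N))))
           (mmul ({..<N} \<times> {..<N}) (kron idm (Zm N)) R)"
  unfolding meq_def
proof (intro ballI)
  fix i k assume "i \<in> {..<N} \<times> {..<N}" "k \<in> {..<N} \<times> {..<N}"
  then obtain a b c d where ik: "i = (a,b)" "k = (c,d)" and abcd: "a < N" "b < N" "c < N" "d < N" by auto
  have M: "mmul ({..<N} \<times> {..<N}) (kron (Zm N) idm) (kron idm (Zm N)) (x,y) (c,d) =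
     (if (x,y) = (c,d) then omg N ^ c * omg N ^ d else 0)" if "x < N" "y < N" for x y
  proof -
    have "mmul ({..<N} \<times> {..<N}) (kron (Zm N) idm) (kron idm (Zm N)) (x,y) (c,d) =
       omg N ^ x * kron idm (Zm N) (x,y) (c,d)"
      by (rule mmul_row2) (use that in \<open>simp_all add: Z1_eq\<close>)
    thus ?thesis using that abcd by (auto simp: Z2_eq)
  qed
  have "mmul ({..<N} \<times> {..<N}) R (mmul ({..<N} \<times> {..<N}) (kron (Zm N) idm) (kron idm (Zm N))) (a,b) (c,d)
     = R (a,b) (c,d) * (omg N ^ c * omg N ^ d)"
    by (rule mmul_col2) (use abcd in \<open>simp_all add: M\<close>)
  also have "\<dots> = omg N ^ b * R (a,b) (c,d)" by (rule S3[OF Rdef])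
  also have "\<dots> = mmul ({..<N} \<times> {..<N}) (kron idm (Zm N)) R (a,b) (c,d)"
    by (rule mmul_row2[symmetric]) (use abcd in \<open>simp_all add: Z2_eq\<close>)
  finally show "mmul ({..<N} \<times> {..<N}) R (mmul ({..<N} \<times> {..<N}) (kron (Zm N) idm) (kron idm (Zm N))) i k =
           mmul ({..<N} \<times> {..<N}) (kron idm (Zm N)) R i k" by (simp add: ik)
qed

lemma C1:
  assumes Rdef: "\<And>a b c d. R (a,b) (c,d) = K * omg N ^ (a*d) * (W (int c - int a) * half_pow N (int a ^ 2)) * dlt N (int c + int d - int b)"
  shows "meq ({..<N} \<times> {..<N}) (mmul ({..<N} \<times> {..<N}) R (mmul ({..<N} \<times> {..<N}) (kron (Zm N) idm) (kron idm (Ym N))))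
           (mmul ({..<N} \<times> {..<N}) (mmul ({..<N} \<times> {..<N}) (kron (Zm N) idm) (kron idm (Ym N))) R)"
  unfolding meq_def
proof (intro ballI)
  fix i k assume "i \<in> {..<N} \<times> {..<N}" "k \<in> {..<N} \<times> {..<N}"
  then obtain a b c d where ik: "i = (a,b)" "k = (c,d)" and abcd: "a < N" "b < N" "c < N" "d < N" by auto
  define M where "M = mmul ({..<N} \<times> {..<N}) (kron (Zm N) idm) (kron idm (Ym N))"
  define b' where "b' = (b + N - 1) mod N"
  have sN: "Suc d mod N < N" "b' < N" using Npos by (simp_all add: b'_def)
  have Mc: "M (x,y) (c,d) =
     (if (x,y) = (c, Suc d mod N) then omg N ^ c * (omg N ^ QQ N * omg N ^ d) else 0)" if "x < N" "y < N" for x y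
  proof -
    have "M (x,y) (c,d) = omg N ^ x * kron idm (Ym N) (x,y) (c,d)"
      unfolding M_def by (rule mmul_row2) (use that in \<open>simp_all add: Z1_eq\<close>)
    thus ?thesis using that abcd by (auto simp: Y2_col)
  qed
  have Mr: "M (a,b) (x,y) =
     (if (x,y) = (a, b') then omg N ^ a * (omg N ^ QQ N * omg N ^ b') else 0)" if "x < N" "y < N" for x y
  proof -
    have "M (a,b) (x,y) = omg N ^ a * kron idm (Ym N) (a,b) (x,y)"
      unfolding M_def by (rule mmul_row2) (use abcd in \<open>simp_all add: Z1_eq\<close>)
    thus ?thesis using that abcd by (auto simp: Y2_row b'_def)
  qed
  obtain k1 where k1: "int (Suc d mod N) = int d + 1 + int N * k1" using sucrep by blast
  obtain k2 where k2: "int b' = int b - 1 + int N * k2" unfolding b'_def using predrep[OF Npos] by blast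
  have "mmul ({..<N} \<times> {..<N}) R M (a,b) (c,d)
     = R (a,b) (c, Suc d mod N) * (omg N ^ c * (omg N ^ QQ N * omg N ^ d))"
    by (rule mmul_col2) (use abcd sN in \<open>simp_all add: Mc\<close>)
  also have "\<dots> = omg N ^ a * (omg N ^ QQ N * omg N ^ b') * R (a,b') (c,d)"
    by (rule S1[OF Rdef k1 k2])
  also have "\<dots> = mmul ({..<N} \<times> {..<N}) M R (a,b) (c,d)"
    by (rule mmul_row2[symmetric]) (use abcd sN in \<open>simp_all add: Mr\<close>)
  finally show "mmul ({..<N} \<times> {..<N}) R (mmul ({..<N} \<times> {..<N}) (kron (Zm N) idm) (kron idm (Ym N))) i k =
           mmul ({..<N} \<times> {..<N}) (mmul ({..<N} \<times> {..<N}) (kron (Zm N) idm) (kron idm (Ym N))) R i k"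
    by (simp add: ik M_def)
qed

lemma C2:
  assumes oddN: "odd N"
    and Rdef: "\<And>a b c d. R (a,b) (c,d) = K * omg N ^ (a*d) * (W (int c - int a) * half_pow N (int a ^ 2)) * dlt N (int c + int d - int b)"
    and Wper: "\<And>n. W n = W (n mod int N)"
  shows "meq ({..<N} \<times> {..<N}) (mmul ({..<N} \<times> {..<N}) R (kron (Ym N) idm))
           (mmul ({..<N} \<times> {..<N}) (mmul ({..<N} \<times> {..<N}) (kron (Ym N) idm) (kron idm (Ym N))) R)"
  unfolding meq_def
proof (intro ballI)
  fix i k assume "i \<in> {..<N} \<times> {..<N}" "k \<in> {..<N} \<times> {..<N}"
  then obtain a b c d where ik: "i = (a,b)" "k = (c,d)" and abcd: "a < N" "b < N" "c < N" "d < N" by auto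
  define M where "M = mmul ({..<N} \<times> {..<N}) (kron (Ym N) idm) (kron idm (Ym N))"
  define a' where "a' = (a + N - 1) mod N"
  define b' where "b' = (b + N - 1) mod N"
  have sN: "Suc c mod N < N" "a' < N" "b' < N" using Npos by (simp_all add: a'_def b'_def)
  have Mr: "M (a,b) (x,y) =
     (if (x,y) = (a', b') then (omg N ^ QQ N * omg N ^ a') * (omg N ^ QQ N * omg N ^ b') else 0)"
    if "x < N" "y < N" for x y
  proof -
    have "M (a,b) (x,y) = (omg N ^ QQ N * omg N ^ a') * kron idm (Ym N) (a',b) (x,y)"
      unfolding M_def by (rule mmul_row2) (use abcd sN in \<open>simp_all add: Y1_row a'_def\<close>)
    thus ?thesis using that abcd sN by (auto simp: Y2_row b'_def)
  qed
  obtain k1 where k1: "int (Suc c mod N) = int c + 1 + int N * k1" using sucrep by blast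
  obtain m where m: "int a' = int a - 1 + int N * m" unfolding a'_def using predrep[OF Npos] by blast
  obtain k2 where k2: "int b' = int b - 1 + int N * k2" unfolding b'_def using predrep[OF Npos] by blast
  have "mmul ({..<N} \<times> {..<N}) R (kron (Ym N) idm) (a,b) (c,d)
     = R (a,b) (Suc c mod N, d) * (omg N ^ QQ N * omg N ^ c)"
    by (rule mmul_col2) (use abcd sN in \<open>auto simp: Y1_col\<close>)
  also have "\<dots> = (omg N ^ QQ N * omg N ^ a') * (omg N ^ QQ N * omg N ^ b') * R (a',b') (c,d)"
    by (rule S2[OF oddN Rdef Wper k1 m k2])
  also have "\<dots> = mmul ({..<N} \<times> {..<N}) M R (a,b) (c,d)"
    by (rule mmul_row2[symmetric]) (use abcd sN in \<open>simp_all add: Mr\<close>)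
  finally show "mmul ({..<N} \<times> {..<N}) R (kron (Ym N) idm) i k =
           mmul ({..<N} \<times> {..<N}) (mmul ({..<N} \<times> {..<N}) (kron (Ym N) idm) (kron idm (Ym N))) R i k"
    by (simp add: ik M_def)
qed

end

theorem lemma6p10:
  fixes N :: nat and \<theta> :: real and rt :: "complex \<Rightarrow> complex"
    and a\<rho> y\<rho> a\<mu> y\<mu> a\<nu> y\<nu> :: complex
  assumes "odd N" and "3 \<le> N"
    and "\<forall>u. rt u ^ N = u"
    and "a\<rho> \<noteq> 0" "y\<rho> \<noteq> 0" "a\<mu> \<noteq> 0" "y\<mu> \<noteq> 0" "a\<nu> \<noteq> 0" "y\<nu> \<noteq> 0"
    and "regular_triple N (a\<rho>, y\<rho>) (a\<mu>, y\<mu>) (a\<nu>, y\<nu>)"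
    and "g_avoids_cuts N \<theta>"
    and "sixj_arg rt N (a\<rho>, y\<rho>) (a\<mu>, y\<mu>) (a\<nu>, y\<nu>) \<in> cut_domain N \<theta>"
    and "standing_convention N \<theta> rt (a\<rho>, y\<rho>) (a\<mu>, y\<mu>) (a\<nu>, y\<nu>)"
  shows "let I = {..<N}; I2 = I \<times> I; R = sixj N \<theta> rt (a\<rho>, y\<rho>) (a\<mu>, y\<mu>) (a\<nu>, y\<nu>);
             Z1 = kron (Zm N) idm; Z2 = kron idm (Zm N);
             Y1 = kron (Ym N) idm; Y2 = kron idm (Ym N)
         in meq I2 (mmul I2 R (mmul I2 Z1 Y2)) (mmul I2 (mmul I2 Z1 Y2) R) \<and>
            meq I2 (mmul I2 R Y1) (mmul I2 (mmul I2 Y1 Y2) R) \<and>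
            meq I2 (mmul I2 R (mmul I2 Z1 Z2)) (mmul I2 Z2 R)"
proof -
  have N: "N > 0" using assms by simp
  define X where "X = snd (prod_par rt N (prod_par rt N (a\<rho>, y\<rho>) (a\<mu>, y\<mu>)) (a\<nu>, y\<nu>)) * snd (a\<mu>, y\<mu>)"
  define Y where "Y = snd (a\<rho>, y\<rho>) * snd (a\<nu>, y\<nu>)"
  define Z where "Z = snd (prod_par rt N (a\<rho>, y\<rho>) (a\<mu>, y\<mu>)) * snd (prod_par rt N (a\<mu>, y\<mu>) (a\<nu>, y\<nu>))"
  define K where "K = h_fun N \<theta> (sixj_arg rt N (a\<rho>, y\<rho>) (a\<mu>, y\<mu>) (a\<nu>, y\<nu>))"
  define W where "W = cyc_omega N X Y Z"
  define R where "R = sixj N \<theta> rt (a\<rho>, y\<rho>) (a\<mu>, y\<mu>) (a\<nu>, y\<nu>)"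
  have Rdef: "\<And>a b c d. R (a,b) (c,d) = K * omg N ^ (a*d) * (W (int c - int a) * half_pow N (int a ^ 2)) * dlt N (int c + int d - int b)"
    by (simp add: R_def sixj_def Let_def cyc_omega2_def K_def W_def X_def Y_def Z_def)
  have Wper: "\<And>n. W n = W (n mod int N)"
    by (simp add: W_def cyc_omega_def)
  show ?thesis
    unfolding Let_def R_def[symmetric]
    using C1[OF N Rdef] C2[OF N assms(1) Rdef Wper] C3[OF N Rdef] by simp
qed

end
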